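(* Let $n\ge 1$ be an integer, $a>0$, and let $a_0,\dots,a_{n-1}:((-a,a)\setminus\{0\})\times\mathbb{K}\to\mathbb{K}$ be arbitrary functions, where $\mathbb{K}=\mathbb{R}$ or $\mathbb{C}$. Let $f\in C^\infty(-a,a)$ be a solution of $$f^{(n)}(x)+a_{n-1}(x,f(x))f^{(n-1)}(x)+\cdots+a_0(x,f(x))f(x)=0,\qquad x\in(-a,a)\setminus\{0\},$$ satisfying $f(0)=f'(0)=\cdots=f^{(n-1)}(0)=0$. If $$|a_k(x,f(x))|=o\!\left(\frac{1}{|x|^{n-k}}\right)\quad\text{as }x\to 0,\qquad k=0,1,\dots,n-1,$$ then there exists $\delta>0$ such that $f\equiv 0$ on $[-\delta,\delta]$.
   Context: The coefficients may be singular at $x=0$; the equation is only required to hold for $x\neq 0$. *)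

theory Defs
  imports "HOL-Analysis.Analysis" "HOL-Library.Landau_Symbols"
begin

definition nderiv :: "nat \<Rightarrow> (real \<Rightarrow> 'a::real_normed_vector) \<Rightarrow> real \<Rightarrow> 'a" where
  "nderiv k f = ((\<lambda>g x. vector_derivative g (at x)) ^^ k) f"

definition smooth_on :: "real set \<Rightarrow> (real \<Rightarrow> 'a::real_normed_vector) \<Rightarrow> bool" where
  "smooth_on S f \<longleftrightarrow> (\<forall>k. \<forall>x\<in>S. nderiv k f differentiable (at x))"

end

theory Submission
  imports Defs
begin

lemma nderiv_Suc: "nderiv (Suc k) f x = vector_derivative (nderiv k f) (at x)"
  unfolding nderiv_def by simp

lemma nderiv_0: "nderiv 0 f = f"
  unfolding nderiv_def by simp

lemma mvt_bound:
  fixes g g' :: "real \<Rightarrow> 'a::real_normed_vector"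
  assumes "\<And>t. t \<in> closed_segment 0 x \<Longrightarrow> (g has_vector_derivative g' t) (at t)"
    "\<And>t. t \<in> closed_segment 0 x \<Longrightarrow> norm (g' t) \<le> B"
  shows "norm (g x - g 0) \<le> B * \<bar>x\<bar>"
proof -
  have "norm (g x - g 0) \<le> B * norm (x - 0)"
  proof (rule differentiable_bound[of "closed_segment 0 x" g "\<lambda>t h. h *\<^sub>R g' t" B x 0])
    show "convex (closed_segment 0 x)" by simp
    fix t assume t: "t \<in> closed_segment 0 x"
    show "(g has_derivative (\<lambda>h. h *\<^sub>R g' t)) (at t within closed_segment 0 x)"
      using assms(1)[OF t] unfolding has_vector_derivative_def
      by (rule has_derivative_at_withinI)
    have "onorm (\<lambda>h. h *\<^sub>R g' t) = norm (g' t)"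
      using onorm_scaleR_left[OF bounded_linear_ident, of "g' t"] by (simp add: onorm_id)
    then show "onorm (\<lambda>h. h *\<^sub>R g' t) \<le> B" using assms(2)[OF t] by simp
  qed auto
  then show ?thesis by simp
qed

lemma main:
  fixes f :: "real \<Rightarrow> 'a::real_normed_field" and A :: "nat \<Rightarrow> real \<Rightarrow> 'a \<Rightarrow> 'a"
  assumes n: "n \<ge> 1" and a: "a > 0" and sm: "smooth_on {-a<..<a} f"
    and eq: "\<forall>x\<in>{-a<..<a} - {0}. nderiv n f x + (\<Sum>k<n. A k x (f x) * nderiv k f x) = 0"
    and init: "\<forall>k<n. nderiv k f 0 = 0"
    and lo: "\<forall>k<n. (\<lambda>x. norm (A k x (f x))) \<in> o[at 0](\<lambda>x. 1 / \<bar>x\<bar> ^ (n - k))"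
  shows "\<exists>\<delta>>0. \<forall>x\<in>{-\<delta>..\<delta>}. f x = 0"
proof -
  define \<epsilon> where "\<epsilon> = 1 / (2 * real n)"
  have epos: "\<epsilon> > 0" using n by (simp add: \<epsilon>_def)
  have "\<forall>k\<in>{..<n}. eventually (\<lambda>x. norm (norm (A k x (f x))) \<le> \<epsilon> * norm (1 / \<bar>x\<bar> ^ (n - k))) (at (0::real))"
    using lo epos landau_o.smallD by blast
  hence "eventually (\<lambda>x. \<forall>k\<in>{..<n}. norm (norm (A k x (f x))) \<le> \<epsilon> * norm (1 / \<bar>x\<bar> ^ (n - k))) (at (0::real))"
    by (intro eventually_ball_finite) auto
  then obtain d where d: "d > 0"
    "\<And>x. x \<noteq> 0 \<Longrightarrow> \<bar>x\<bar> < d \<Longrightarrow> \<forall>k\<in>{..<n}. norm (A k x (f x)) \<le> \<epsilon> / \<bar>x\<bar> ^ (n - k)"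
    unfolding eventually_at by (auto simp: dist_real_def)
  define \<delta> where "\<delta> = min (d/2) (a/2)"
  have \<delta>: "\<delta> > 0" "\<delta> < d" "\<delta> < a" using d a by (auto simp: \<delta>_def)
  have sub: "{-\<delta>..\<delta>} \<subseteq> {-a<..<a}" using \<delta> by auto
  have diff: "\<And>k x. x \<in> {-\<delta>..\<delta>} \<Longrightarrow> nderiv k f differentiable (at x)"
    using sm sub unfolding smooth_on_def by blast
  have der: "\<And>k x. x \<in> {-\<delta>..\<delta>} \<Longrightarrow> (nderiv k f has_vector_derivative nderiv (Suc k) f x) (at x)"
    using diff vector_derivative_works nderiv_Suc by metis
  have cont: "continuous_on {-\<delta>..\<delta>} (\<lambda>x. norm (nderiv n f x))"
    by (intro continuous_on_norm continuous_at_imp_continuous_on ballI differentiable_imp_continuous_within diff)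
  obtain x0 where x0: "x0 \<in> {-\<delta>..\<delta>}" "\<forall>y\<in>{-\<delta>..\<delta>}. norm (nderiv n f y) \<le> norm (nderiv n f x0)"
    using continuous_attains_sup[OF compact_Icc _ cont] \<delta> by auto
  define M where "M = norm (nderiv n f x0)"
  have M0: "M \<ge> 0" by (simp add: M_def)
  have claim: "\<forall>j\<le>n. \<forall>x\<in>{-\<delta>..\<delta>}. norm (nderiv (n-j) f x) \<le> M * \<bar>x\<bar>^j"
  proof (intro allI impI)
    fix j assume "j \<le> n" thus "\<forall>x\<in>{-\<delta>..\<delta>}. norm (nderiv (n-j) f x) \<le> M * \<bar>x\<bar>^j"
    proof (induction j)
      case 0 then show ?case using x0 by (simp add: M_def)
    next
      case (Suc j)
      hence IH: "\<forall>x\<in>{-\<delta>..\<delta>}. norm (nderiv (n-j) f x) \<le> M * \<bar>x\<bar>^j" by simp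
      define k where "k = n - Suc j"
      have kS: "Suc k = n - j" "k < n" using Suc.prems by (auto simp: k_def)
      show ?case
      proof
        fix x assume x: "x \<in> {-\<delta>..\<delta>}"
        have seg: "closed_segment 0 x \<subseteq> {-\<delta>..\<delta>}" using x
          by (auto simp: closed_segment_eq_real_ivl split: if_splits)
        have "norm (nderiv k f x - nderiv k f 0) \<le> (M * \<bar>x\<bar>^j) * \<bar>x\<bar>"
        proof (rule mvt_bound)
          fix t assume t: "t \<in> closed_segment 0 x"
          show "(nderiv k f has_vector_derivative nderiv (n-j) f t) (at t)"
            using der[of t k] seg t kS by auto
          have "\<bar>t\<bar> \<le> \<bar>x\<bar>" using t by (auto simp: closed_segment_eq_real_ivl split: if_splits)
          hence "M * \<bar>t\<bar>^j \<le> M * \<bar>x\<bar>^j" using M0 by (intro mult_left_mono power_mono) auto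
          then show "norm (nderiv (n-j) f t) \<le> M * \<bar>x\<bar>^j" using IH seg t by force
        qed
        then show "norm (nderiv (n - Suc j) f x) \<le> M * \<bar>x\<bar> ^ Suc j"
          using init kS by (simp add: k_def mult_ac)
      qed
    qed
  qed
  have bnd: "norm (nderiv n f x) \<le> M/2" if x: "x \<in> {-\<delta>..\<delta>}" "x \<noteq> 0" for x
  proof -
    have "x \<in> {-a<..<a} - {0}" using x sub by auto
    hence "nderiv n f x = - (\<Sum>k<n. A k x (f x) * nderiv k f x)" using eq
      by (simp add: eq_neg_iff_add_eq_0)
    hence "norm (nderiv n f x) \<le> (\<Sum>k<n. norm (A k x (f x) * nderiv k f x))"
      by (simp add: norm_sum)
    also have "\<dots> \<le> (\<Sum>k<n. \<epsilon> * M)"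
    proof (rule sum_mono)
      fix k assume k: "k \<in> {..<n}"
      have ax: "\<bar>x\<bar>^(n-k) > 0" using x by simp
      have "norm (A k x (f x)) \<le> \<epsilon> / \<bar>x\<bar>^(n-k)" using d(2)[of x] x \<delta> k by auto
      moreover have "norm (nderiv k f x) \<le> M * \<bar>x\<bar>^(n-k)"
        using claim[rule_format, of "n-k" x] k x by auto
      ultimately have "norm (A k x (f x)) * norm (nderiv k f x) \<le> (\<epsilon> / \<bar>x\<bar>^(n-k)) * (M * \<bar>x\<bar>^(n-k))"
        using epos by (intro mult_mono) auto
      also have "\<dots> = \<epsilon> * M" using ax x by (simp add: field_simps)
      finally show "norm (A k x (f x) * nderiv k f x) \<le> \<epsilon> * M" by (simp add: norm_mult)
    qed
    also have "\<dots> = M/2" using n by (simp add: \<epsilon>_def)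
    finally show ?thesis .
  qed
  have "norm (nderiv n f 0) \<le> M/2"
  proof (rule Lim_norm_ubound[OF trivial_limit_at])
    have "isCont (nderiv n f) 0" using diff[of 0 n] \<delta> by (simp add: differentiable_imp_continuous_within)
    then show "(nderiv n f \<longlongrightarrow> nderiv n f 0) (at 0)" by (simp add: isCont_def)
    show "eventually (\<lambda>x. norm (nderiv n f x) \<le> M/2) (at 0)"
      unfolding eventually_at using \<delta> bnd by (intro exI[of _ \<delta>]) (auto simp: dist_real_def abs_less_iff)
  qed
  hence "\<forall>y\<in>{-\<delta>..\<delta>}. norm (nderiv n f y) \<le> M/2" using bnd by metis
  hence "M \<le> M/2" using x0 M_def by auto
  hence M: "M = 0" using M0 by simp
  show ?thesis using claim[rule_format, of n] \<delta> M by (intro exI[of _ \<delta>]) (auto simp: nderiv_0)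
qed

theorem corollary2:
  shows "(\<forall>(n::nat) (a::real) (f::real \<Rightarrow> real) (A::nat \<Rightarrow> real \<Rightarrow> real \<Rightarrow> real).
            n \<ge> 1 \<longrightarrow> a > 0 \<longrightarrow> smooth_on {-a<..<a} f \<longrightarrow>
            (\<forall>x\<in>{-a<..<a} - {0}. nderiv n f x + (\<Sum>k<n. A k x (f x) * nderiv k f x) = 0) \<longrightarrow>
            (\<forall>k<n. nderiv k f 0 = 0) \<longrightarrow>
            (\<forall>k<n. (\<lambda>x. norm (A k x (f x))) \<in> o[at 0](\<lambda>x. 1 / \<bar>x\<bar> ^ (n - k))) \<longrightarrow>
            (\<exists>\<delta>>0. \<forall>x\<in>{-\<delta>..\<delta>}. f x = 0))
       \<and> (\<forall>(n::nat) (a::real) (f::real \<Rightarrow> complex) (A::nat \<Rightarrow> real \<Rightarrow> complex \<Rightarrow> complex).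
            n \<ge> 1 \<longrightarrow> a > 0 \<longrightarrow> smooth_on {-a<..<a} f \<longrightarrow>
            (\<forall>x\<in>{-a<..<a} - {0}. nderiv n f x + (\<Sum>k<n. A k x (f x) * nderiv k f x) = 0) \<longrightarrow>
            (\<forall>k<n. nderiv k f 0 = 0) \<longrightarrow>
            (\<forall>k<n. (\<lambda>x. norm (A k x (f x))) \<in> o[at 0](\<lambda>x. 1 / \<bar>x\<bar> ^ (n - k))) \<longrightarrow>
            (\<exists>\<delta>>0. \<forall>x\<in>{-\<delta>..\<delta>}. f x = 0))"
  using main[where 'a=real] main[where 'a=complex] by blast

end
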